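(* Let $C(n)$ be the number of distinct nonempty words $\omega$ such that $\omega\omega\omega$ is a factor of $\mathbb{T}[1,n]$. Then $C(t_m)=0$ for $m\leq6$, and for $m\geq7$, $C(t_m)=\frac{t_{m-5}+t_{m-6}-m+3}{2}$.
   Context: The Tribonacci sequence $\mathbb{T}=x_1x_2x_3\cdots$ is the fixed point (infinite word starting with $a$) of the substitution $\sigma(a)=ab$, $\sigma(b)=ac$, $\sigma(c)=a$ over $\{a,b,c\}$. For $n\ge1$, $\mathbb{T}[1,n]=x_1\cdots x_n$ is its prefix of length $n$. The Tribonacci numbers are $t_m=|\sigma^m(a)|$ for $m\ge0$, with $t_{-2}=0$, $t_{-1}=1$; thus $t_0=1,t_1=2,t_2=4$ and $t_m=t_{m-1}+t_{m-2}+t_{m-3}$. *)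

theory Defs
  imports Complex_Main "HOL-Library.Sublist"
begin

datatype letter = A | B | C

fun sigma1 :: "letter \<Rightarrow> letter list" where
  "sigma1 A = [A, B]"
| "sigma1 B = [A, C]"
| "sigma1 C = [A]"

definition sigma :: "letter list \<Rightarrow> letter list" where
  "sigma w = concat (map sigma1 w)"

definition trib :: "nat \<Rightarrow> nat" where
  "trib m = length ((sigma ^^ m) [A])"

text \<open>The infinite Tribonacci word, 0-indexed: position i is read off sigma^(i+1)(a),
  which has length > i and is a prefix of the fixed point.\<close>
definition tword :: "nat \<Rightarrow> letter" where
  "tword i = ((sigma ^^ Suc i) [A]) ! i"

definition tprefix :: "nat \<Rightarrow> letter list" where
  "tprefix n = map tword [0..<n]"

definition cube_count :: "nat \<Rightarrow> nat" where
  "cube_count n = card {w. w \<noteq> [] \<and> sublist (w @ w @ w) (tprefix n)}"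

end

theory Submission
  imports Defs
begin

lemma sigma_nil[simp]: "sigma [] = []" by (simp add: sigma_def)
lemma sigma_Cons[simp]: "sigma (x # xs) = sigma1 x @ sigma xs" by (simp add: sigma_def)
lemma sigma_append[simp]: "sigma (xs @ ys) = sigma xs @ sigma ys" by (simp add: sigma_def)

lemma sigma_prefix: "prefix xs ys \<Longrightarrow> prefix (sigma xs) (sigma ys)"
  by (auto simp: prefix_def)

abbreviation W :: "nat \<Rightarrow> letter list" where "W n \<equiv> (sigma ^^ n) [A]"

lemma W_Suc: "W (Suc n) = sigma (W n)" by simp

lemma W_prefix_Suc: "prefix (W n) (W (Suc n))"
proof (induction n)
  case 0 then show ?case by (simp add: sigma_def)
next
  case (Suc n)
  then show ?case using sigma_prefix by (metis W_Suc)
qed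

lemma W_prefix: "a \<le> b \<Longrightarrow> prefix (W a) (W b)"
proof (induction b)
  case 0 then show ?case by simp
next
  case (Suc b)
  show ?case
  proof (cases "a = Suc b")
    case True then show ?thesis by simp
  next
    case False
    then have "a \<le> b" using Suc.prems by simp
    then show ?thesis using Suc.IH W_prefix_Suc prefix_order.order_trans by blast
  qed
qed

lemma W_rec: "W (n+3) = W (n+2) @ W (n+1) @ W n"
proof (induction n)
  case 0 then show ?case by (simp add: sigma_def numeral_eq_Suc)
next
  case (Suc n)
  have "W (Suc n + 3) = sigma (W (n+3))" by (simp add: numeral_eq_Suc)
  also have "\<dots> = sigma (W (n+2)) @ sigma (W (n+1)) @ sigma (W n)" using Suc by simp
  also have "\<dots> = W (Suc n + 2) @ W (Suc n + 1) @ W (Suc n)" by (simp add: numeral_eq_Suc)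
  finally show ?case .
qed

lemma trib_rec: "trib (n+3) = trib (n+2) + trib (n+1) + trib n"
  unfolding trib_def by (simp add: W_rec)

lemma trib_012: "trib 0 = 1" "trib 1 = 2" "trib 2 = 4"
  by (simp_all add: trib_def sigma_def numeral_eq_Suc)

lemma trib_2S: "trib (Suc (Suc 0)) = 4" unfolding numeral_2_eq_2[symmetric] by (rule trib_012(3))

lemma trib_ge: "trib n \<ge> n + 1"
proof (induction n rule: less_induct)
  case (less n)
  show ?case
  proof (cases "n < 3")
    case True
    then have "n = 0 \<or> n = 1 \<or> n = 2" by auto
    then show ?thesis using trib_012 by auto
  next
    case False
    then obtain k where k: "n = k + 3" by (metis add.commute le_Suc_ex not_less)
    have "trib (k+2) \<ge> k + 3" using less.IH[of "k+2"] k by simp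
    moreover have "trib k \<ge> 1" using less.IH[of k] k by simp
    ultimately show ?thesis using trib_rec[of k] k by simp
  qed
qed

lemma trib_pos: "trib n > 0" using trib_ge[of n] by simp

lemma trib_Suc_gt: "trib n < trib (Suc n)"
proof (cases "n < 2")
  case True
  then have "n = 0 \<or> n = 1" by auto
  then show ?thesis using trib_012 trib_2S by auto
next
  case False
  then obtain k where k: "n = k + 2" by (metis add.commute le_Suc_ex not_less)
  then show ?thesis using trib_rec[of k] trib_pos[of "k+1"] trib_pos[of k]
    by (simp add: numeral_eq_Suc)
qed

lemma trib_strict_mono: "strict_mono trib"
  by (simp add: strict_mono_Suc_iff trib_Suc_gt)

lemma trib_mono: "a \<le> b \<Longrightarrow> trib a \<le> trib b"
  using trib_strict_mono strict_mono_less_eq by blast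

lemma trib_less_iff: "trib a < trib b \<longleftrightarrow> a < b"
  using trib_strict_mono strict_mono_less by blast

lemma trib_inj: "trib a = trib b \<Longrightarrow> a = b"
  using trib_strict_mono strict_mono_eq by blast

lemma len_W: "length (W n) = trib n" by (simp add: trib_def)

lemma tword_W: "i < trib N \<Longrightarrow> tword i = W N ! i"
proof -
  assume i: "i < trib N"
  let ?M = "max N (Suc i)"
  have p1: "prefix (W N) (W ?M)" by (rule W_prefix) simp
  have p2: "prefix (W (Suc i)) (W ?M)" by (rule W_prefix) simp
  have i2: "i < length (W (Suc i))" using trib_ge[of "Suc i"] len_W[of "Suc i"] by linarith
  have "tword i = W (Suc i) ! i" by (simp add: tword_def)
  also have "\<dots> = W ?M ! i" using p2 i2 by (metis prefix_def nth_append)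
  also have "\<dots> = W N ! i" using p1 i len_W by (metis prefix_def nth_append)
  finally show ?thesis .
qed

lemma tprefix_W: "n \<le> trib N \<Longrightarrow> tprefix n = take n (W N)"
  by (auto simp: tprefix_def list_eq_iff_nth_eq tword_W len_W)

lemma tprefix_trib: "tprefix (trib m) = W m"
  using tprefix_W[of "trib m" m] len_W by simp

lemma length_tprefix[simp]: "length (tprefix n) = n" by (simp add: tprefix_def)

lemma tprefix_nth: "x < n \<Longrightarrow> tprefix n ! x = tword x" by (simp add: tprefix_def)

lemma tprefix_Suc: "tprefix (Suc n) = tprefix n @ [tword n]" by (simp add: tprefix_def)

lemma tprefix_add: "tprefix (a + b) = tprefix a @ map tword [a..<a+b]"
proof -
  have "[0..<a+b] = [0..<a] @ [a..<a+b]" by (rule upt_add_eq_append) simp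
  then show ?thesis by (simp add: tprefix_def)
qed

definition Phi :: "nat \<Rightarrow> nat" where "Phi j = length (sigma (tprefix j))"

lemma length_sigma_le: "length (sigma xs) \<le> 2 * length xs"
proof (induction xs)
  case Nil then show ?case by simp
next
  case (Cons x xs) then show ?case by (cases x) auto
qed

lemma tprefix_Phi: "tprefix (Phi j) = sigma (tprefix j)"
proof -
  have "j \<le> trib j" using trib_ge[of j] by simp
  then have e: "tprefix j = take j (W j)" by (rule tprefix_W)
  have "prefix (tprefix j) (W j)" by (simp add: e take_is_prefix)
  then have pr: "prefix (sigma (tprefix j)) (W (Suc j))" using sigma_prefix by simp
  then have "Phi j \<le> trib (Suc j)" unfolding Phi_def using len_W prefix_length_le by metis
  then have "tprefix (Phi j) = take (Phi j) (W (Suc j))" by (rule tprefix_W)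
  also have "\<dots> = sigma (tprefix j)" using pr unfolding Phi_def
    by (metis append_eq_conv_conj prefix_def)
  finally show ?thesis .
qed

lemma Phi_0[simp]: "Phi 0 = 0" by (simp add: Phi_def tprefix_def)

lemma Phi_Suc: "Phi (Suc j) = Phi j + length (sigma1 (tword j))"
  by (simp add: Phi_def tprefix_Suc)

lemma len_sigma1: "length (sigma1 x) = (if x = C then 1 else 2)"
  by (cases x) auto

lemma Phi_Suc': "Phi (Suc j) = Phi j + (if tword j = C then 1 else 2)"
  using Phi_Suc len_sigma1 by simp

lemma tword_Phi_block: "l < length (sigma1 (tword j)) \<Longrightarrow> tword (Phi j + l) = sigma1 (tword j) ! l"
proof -
  assume l: "l < length (sigma1 (tword j))"
  have "tprefix (Phi (Suc j)) = sigma (tprefix j) @ sigma1 (tword j)"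
    by (simp add: tprefix_Phi tprefix_Suc)
  then have "tprefix (Phi (Suc j)) ! (Phi j + l) = sigma1 (tword j) ! l"
    by (simp add: Phi_def nth_append)
  moreover have "Phi j + l < Phi (Suc j)" using l Phi_Suc by simp
  ultimately show ?thesis using tprefix_nth by metis
qed

lemma tword_Phi: "tword (Phi j) = A"
  using tword_Phi_block[of 0 j] by (cases "tword j") auto

fun nl :: "letter \<Rightarrow> letter" where
  "nl A = B" | "nl B = C" | "nl C = A"

lemma nl_inj: "nl x = nl y \<longleftrightarrow> x = y"
  by (cases x; cases y) auto

lemma tword_Phi1: "tword (Phi j + 1) = nl (tword j)"
proof (cases "tword j = C")
  case True
  then have "Phi j + 1 = Phi (Suc j)" using Phi_Suc' by simp
  then show ?thesis using True tword_Phi by simp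
next
  case False
  then show ?thesis using tword_Phi_block[of 1 j] by (cases "tword j") auto
qed

lemma tword_Phi1S: "tword (Suc (Phi j)) = nl (tword j)"
  using tword_Phi1 by simp

lemma tword_Phi_last: "tword (Phi (Suc j) - 1) = nl (tword j)"
proof (cases "tword j = C")
  case True
  then have "Phi (Suc j) - 1 = Phi j" using Phi_Suc' by simp
  then show ?thesis using True tword_Phi by simp
next
  case False
  then have "Phi (Suc j) - 1 = Phi j + 1" using Phi_Suc' by simp
  then show ?thesis using tword_Phi1 by simp
qed

lemma Phi_less_Suc: "Phi j < Phi (Suc j)" using Phi_Suc' by simp

lemma Phi_strict_mono: "strict_mono Phi"
  by (simp add: strict_mono_Suc_iff Phi_less_Suc)

lemma Phi_less_iff: "Phi a < Phi b \<longleftrightarrow> a < b"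
  using Phi_strict_mono strict_mono_less by blast

lemma Phi_le_iff: "Phi a \<le> Phi b \<longleftrightarrow> a \<le> b"
  using Phi_strict_mono strict_mono_less_eq by blast

lemma Phi_inj: "Phi a = Phi b \<longleftrightarrow> a = b"
  using Phi_strict_mono strict_mono_eq by blast

lemma Phi_ge: "Phi j \<ge> j"
  by (induction j) (auto simp: Phi_Suc')

lemma Phi_cover: "\<exists>x. Phi x \<le> i \<and> i < Phi (Suc x)"
proof (induction i)
  case 0 then show ?case using Phi_less_Suc[of 0] by (intro exI[of _ 0]) simp
next
  case (Suc i)
  then obtain x where x: "Phi x \<le> i" "i < Phi (Suc x)" by blast
  show ?case
  proof (cases "Suc i < Phi (Suc x)")
    case True then show ?thesis using x by (intro exI[of _ x]) simp
  next
    case False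
    then have "Suc i = Phi (Suc x)" using x by simp
    then show ?thesis using Phi_less_Suc[of "Suc x"] by auto
  qed
qed

lemma tword_A_Phi: "tword i = A \<Longrightarrow> \<exists>x. i = Phi x"
proof -
  assume a: "tword i = A"
  obtain x where x: "Phi x \<le> i" "i < Phi (Suc x)" using Phi_cover by blast
  show ?thesis
  proof (cases "i = Phi x")
    case True then show ?thesis by blast
  next
    case False
    then have i: "i = Phi x + 1" "Phi (Suc x) = Phi x + 2" using x Phi_Suc' by (auto split: if_splits)
    then have "tword x \<noteq> C" using Phi_Suc'[of x] by auto
    moreover have "tword i = nl (tword x)" using i tword_Phi1 by simp
    ultimately show ?thesis using a by (cases "tword x") auto
  qed
qed

lemma tword_nonA: "tword i \<noteq> A \<Longrightarrow> 0 < i \<and> tword (i - 1) = A \<and> tword (Suc i) = A"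
proof -
  assume a: "tword i \<noteq> A"
  obtain x where x: "Phi x \<le> i" "i < Phi (Suc x)" using Phi_cover by blast
  have "i \<noteq> Phi x" using a tword_Phi by auto
  then have i: "i = Phi x + 1" "Phi (Suc x) = Phi x + 2" using x Phi_Suc' by (auto split: if_splits)
  then show ?thesis using tword_Phi[of x] tword_Phi[of "Suc x"] by simp
qed

lemma no_AAA: "\<not> (tword i = A \<and> tword (i+1) = A \<and> tword (i+2) = A)"
proof
  assume h: "tword i = A \<and> tword (i+1) = A \<and> tword (i+2) = A"
  obtain x where x: "i = Phi x" using h tword_A_Phi by blast
  have "tword x = C"
  proof (rule ccontr)
    assume "tword x \<noteq> C"
    then have "tword (i+1) = nl (tword x)" "nl (tword x) \<noteq> A" using x tword_Phi1 by (auto, cases "tword x", auto)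
    then show False using h by simp
  qed
  then have x1: "i + 1 = Phi (Suc x)" using x Phi_Suc' by simp
  have "tword (Suc x) = C"
  proof (rule ccontr)
    assume "tword (Suc x) \<noteq> C"
    then have "tword (i+2) = nl (tword (Suc x))" "nl (tword (Suc x)) \<noteq> A"
      using x1 tword_Phi1[of "Suc x"] by (auto, cases "tword (Suc x)", auto)
    then show False using h by simp
  qed
  then show False using tword_nonA[of "Suc x"] \<open>tword x = C\<close> by simp
qed

lemma Phi_two: "Phi (j + 2) \<ge> Phi j + 3"
proof -
  have "\<not> (tword j = C \<and> tword (Suc j) = C)" using tword_nonA[of j] by auto
  then show ?thesis using Phi_Suc'[of j] Phi_Suc'[of "Suc j"] by (auto split: if_splits)
qed



definition seg :: "nat \<Rightarrow> nat \<Rightarrow> letter list" where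
  "seg i n = map tword [i..<i+n]"

lemma length_seg[simp]: "length (seg i n) = n" by (simp add: seg_def)

lemma seg_nth: "l < n \<Longrightarrow> seg i n ! l = tword (i + l)" by (simp add: seg_def)

lemma seg_eq_iff: "seg i n = seg j n \<longleftrightarrow> (\<forall>l<n. tword (i+l) = tword (j+l))"
  by (auto simp: list_eq_iff_nth_eq seg_nth)

lemma seg_add: "seg i (a + b) = seg i a @ seg (i + a) b"
proof -
  have "[i..<i+a+b] = [i..<i+a] @ [i+a..<i+a+b]" by (rule upt_add_eq_append) simp
  then show ?thesis by (simp add: seg_def add.assoc)
qed

lemma tprefix_add_seg: "tprefix (a + b) = tprefix a @ seg a b"
  by (simp add: tprefix_add seg_def)

lemma seg_Phi: "Phi (j + m) = Phi j + length (sigma (seg j m)) \<and>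
   seg (Phi j) (Phi (j + m) - Phi j) = sigma (seg j m)"
proof -
  have "tprefix (Phi (j+m)) = sigma (tprefix j) @ sigma (seg j m)"
    by (simp add: tprefix_Phi tprefix_add_seg)
  then have e: "tprefix (Phi (j+m)) = tprefix (Phi j) @ sigma (seg j m)" by (simp add: tprefix_Phi)
  then have l: "Phi (j + m) = Phi j + length (sigma (seg j m))"
    by (metis length_append length_tprefix)
  then have "tprefix (Phi (j+m)) = tprefix (Phi j) @ seg (Phi j) (Phi (j + m) - Phi j)"
    using tprefix_add_seg[of "Phi j" "Phi (j+m) - Phi j"] by simp
  with e l show ?thesis by simp
qed

lemma seg_eq_Phi:
  assumes "seg a L = seg b L"
  shows "Phi (a+L) - Phi a = Phi (b+L) - Phi b \<and>
         seg (Phi a) (Phi (a+L) - Phi a + 1) = seg (Phi b) (Phi (b+L) - Phi b + 1)"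
proof -
  have 1: "Phi (a+L) - Phi a = Phi (b+L) - Phi b" using seg_Phi[of a L] seg_Phi[of b L] assms by simp
  have ea: "seg (Phi a) (Phi (a+L) - Phi a) = sigma (seg a L)" using seg_Phi by blast
  have eb: "seg (Phi b) (Phi (b+L) - Phi b) = sigma (seg b L)" using seg_Phi by blast
  have 2: "seg (Phi a) (Phi (a+L) - Phi a) = seg (Phi b) (Phi (b+L) - Phi b)"
    by (simp only: ea eb assms)
  have pa: "Phi a \<le> Phi (a+L)" "Phi b \<le> Phi (b+L)" by (simp_all add: Phi_le_iff)
  have "seg (Phi a) (Phi (a+L) - Phi a + 1) = seg (Phi a) (Phi (a+L) - Phi a) @ [A]"
    using pa tword_Phi[of "a+L"] by (simp add: seg_add seg_def)
  moreover have "seg (Phi b) (Phi (b+L) - Phi b + 1) = seg (Phi b) (Phi (b+L) - Phi b) @ [A]"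
    using pa tword_Phi[of "b+L"] by (simp add: seg_add seg_def)
  ultimately show ?thesis using 1 2 by simp
qed

definition per :: "nat \<Rightarrow> nat \<Rightarrow> nat \<Rightarrow> bool" where
  "per i p n \<longleftrightarrow> (\<forall>l<n. tword (i+l) = tword (i+l+p))"

lemma per_seg: "per i p n \<longleftrightarrow> seg i n = seg (i+p) n"
  by (auto simp: per_def seg_eq_iff add.commute add.left_commute)

lemma per_mono: "per i p n \<Longrightarrow> m \<le> n \<Longrightarrow> per i p m"
  by (auto simp: per_def)

lemma T1:
  assumes "per j q m"
  shows "per (Phi j) (Phi (j+q) - Phi j) (Phi (j+m) - Phi j + 1) \<and>
         Phi (j+q+m) = Phi (j+m) + (Phi (j+q) - Phi j)"
proof -
  have s: "seg j m = seg (j+q) m" using assms per_seg by blast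
  from seg_eq_Phi[OF s]
  have 1: "Phi (j+m) - Phi j = Phi (j+q+m) - Phi (j+q)"
   and 2: "seg (Phi j) (Phi (j+m) - Phi j + 1) = seg (Phi (j+q)) (Phi (j+q+m) - Phi (j+q) + 1)"
    by auto
  have m1: "Phi j \<le> Phi (j+m)" "Phi j \<le> Phi (j+q)" "Phi (j+q) \<le> Phi (j+q+m)" by (simp_all add: Phi_le_iff)
  have 3: "Phi (j+q+m) = Phi (j+m) + (Phi (j+q) - Phi j)" using 1 m1 by linarith
  have "seg (Phi j) (Phi (j+m) - Phi j + 1) = seg (Phi j + (Phi (j+q) - Phi j)) (Phi (j+m) - Phi j + 1)"
    using 2 1 m1 by simp
  then have "per (Phi j) (Phi (j+q) - Phi j) (Phi (j+m) - Phi j + 1)" using per_seg by blast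
  with 3 show ?thesis by blast
qed

lemma T1': "per j q m \<Longrightarrow> Phi (j+m+q) = Phi (j+m) + (Phi (j+q) - Phi j)"
proof -
  assume h: "per j q m"
  have e: "j + m + q = j + q + m" by simp
  show ?thesis unfolding e using T1[OF h] by blast
qed

lemma BackT:
  assumes per: "per (Phi j) p n" and jq: "Phi (j+q) = Phi j + p"
  shows "Phi (j+l) + 1 < Phi j + n \<Longrightarrow> Phi (j+l+q) = Phi (j+l) + p \<and> tword (j+l) = tword (j+l+q)"
proof (induction l)
  case 0
  have 1: "1 < n" using 0 by simp
  have "tword (Phi j + 1) = tword (Phi j + 1 + p)" using per[unfolded per_def, rule_format, OF 1] .
  then have "nl (tword j) = nl (tword (j+q))" using tword_Phi1[of j] tword_Phi1[of "j+q"] jq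
    by (simp add: add.commute add.left_commute)
  then show ?case using jq by (simp add: nl_inj)
next
  case (Suc l)
  have lt: "Phi (j+l) < Phi (j + Suc l)" by (simp add: Phi_less_iff)
  then have "Phi (j+l) + 1 < Phi j + n" using Suc.prems by simp
  then have IH: "Phi (j+l+q) = Phi (j+l) + p" "tword (j+l) = tword (j+l+q)" using Suc.IH by auto
  have e: "Phi (j + Suc l + q) = Phi (j + Suc l) + p"
    using Phi_Suc'[of "j+l"] Phi_Suc'[of "j+l+q"] IH by simp
  have ge: "Phi j \<le> Phi (j + Suc l)" by (simp add: Phi_le_iff)
  have "tword (Phi j + (Phi (j + Suc l) - Phi j + 1)) = tword (Phi j + (Phi (j + Suc l) - Phi j + 1) + p)"
  proof -
    have "Phi (j + Suc l) - Phi j + 1 < n" using Suc.prems ge by linarith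
    then show ?thesis using per[unfolded per_def, rule_format] by blast
  qed
  then have "tword (Phi (j + Suc l) + 1) = tword (Phi (j + Suc l + q) + 1)"
    using ge e by (simp add: add.commute add.left_commute)
  then have "nl (tword (j + Suc l)) = nl (tword (j + Suc l + q))" by (simp add: tword_Phi1S)
  then show ?case using e by (simp add: nl_inj)
qed

definition maxrun :: "nat \<Rightarrow> nat \<Rightarrow> nat \<Rightarrow> bool" where
  "maxrun i p n \<longleftrightarrow> 0 < p \<and> per i p n \<and> tword (i+n) \<noteq> tword (i+n+p) \<and>
     (i = 0 \<or> tword (i-1) \<noteq> tword (i-1+p))"



lemma Phi_add_ge: "Phi (a + b) \<ge> Phi a + b"
  by (induction b) (auto simp: Phi_Suc')

lemma FM:
  assumes mr: "maxrun j q m"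
  shows "maxrun (Phi j) (Phi (j+q) - Phi j) (Phi (j+m) - Phi j + 1)"
proof -
  let ?p = "Phi (j+q) - Phi j"
  have q: "0 < q" and per: "per j q m" and mis: "tword (j+m) \<noteq> tword (j+m+q)"
    and lf: "j = 0 \<or> tword (j-1) \<noteq> tword (j-1+q)" using mr by (auto simp: maxrun_def)
  have p: "0 < ?p" using q by (simp add: Phi_less_iff)
  have t1: "per (Phi j) ?p (Phi (j+m) - Phi j + 1)" using T1[OF per] by blast
  have t1': "Phi (j+m+q) = Phi (j+m) + ?p" using T1'[OF per] .
  have ge: "Phi j \<le> Phi (j+m)" "Phi j \<le> Phi (j+q)" by (simp_all add: Phi_le_iff)
  have "tword (Suc (Phi (j+m))) \<noteq> tword (Suc (Phi (j+m+q)))"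
    using mis by (simp add: tword_Phi1S nl_inj)
  then have r: "tword (Phi j + (Phi (j+m) - Phi j + 1)) \<noteq> tword (Phi j + (Phi (j+m) - Phi j + 1) + ?p)"
    using ge t1' by simp
  have l: "Phi j = 0 \<or> tword (Phi j - 1) \<noteq> tword (Phi j - 1 + ?p)"
  proof (cases "j = 0")
    case True then show ?thesis by simp
  next
    case False
    then obtain j' where j': "j = Suc j'" by (cases j) auto
    have "tword (Phi j - 1) = nl (tword j')" using tword_Phi_last[of j'] j' by simp
    moreover have "Phi j - 1 + ?p = Phi (Suc (j' + q)) - 1"
      using ge j' Phi_ge[of j] False by simp
    moreover have "tword (Phi (Suc (j' + q)) - 1) = nl (tword (j' + q))" by (rule tword_Phi_last)
    moreover have "tword j' \<noteq> tword (j' + q)" using lf False j' by simp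
    ultimately show ?thesis by (simp add: nl_inj)
  qed
  show ?thesis using p t1 r l by (simp add: maxrun_def)
qed

lemma BM:
  assumes mr: "maxrun i p n" and p2: "2 \<le> p" and big: "2*p \<le> n+1"
  shows "\<exists>j q m. i = Phi j \<and> Phi (j+q) = Phi j + p \<and> maxrun j q m \<and>
     n = Phi (j+m) - Phi j + 1 \<and> q < p \<and> 2*q \<le> m+1"
proof -
  have per: "per i p n" and mis: "tword (i+n) \<noteq> tword (i+n+p)"
    and lf: "i = 0 \<or> tword (i-1) \<noteq> tword (i-1+p)" using mr by (auto simp: maxrun_def)
  have n1: "0 < n" using p2 big by simp
  have e0: "tword i = tword (i+p)" using per n1 unfolding per_def by (metis add_0_right)
  have iA: "tword i = A"
  proof (rule ccontr)
    assume h: "tword i \<noteq> A"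
    then have h1: "0 < i" "tword (i-1) = A" using tword_nonA by auto
    have "tword (i+p) \<noteq> A" using h e0 by simp
    then have "tword (i+p-1) = A" using tword_nonA by auto
    then show False using lf h1 by (simp add: add.commute)
  qed
  then obtain j where j: "i = Phi j" using tword_A_Phi by blast
  have "tword (i+p) = A" using iA e0 by simp
  then obtain j2 where j2: "i + p = Phi j2" using tword_A_Phi by blast
  have "Phi j < Phi j2" using j j2 p2 by simp
  then have jj2: "j < j2" by (simp add: Phi_less_iff)
  define q where "q = j2 - j"
  have jq: "Phi (j+q) = Phi j + p" using j j2 jj2 q_def by simp
  have q0: "0 < q" using jj2 q_def by simp
  have pq: "Phi (j+q) - Phi j = p" using jq by simp
  have ex: "\<exists>l. tword (j+l) \<noteq> tword (j+l+q)"
  proof (rule ccontr)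
    assume "\<not> ?thesis"
    then have "per j q n" by (simp add: per_def)
    from T1[OF this] have "per i p (Phi (j+n) - Phi j + 1)" using pq j by simp
    moreover have "Phi (j+n) \<ge> Phi j + n" by (rule Phi_add_ge)
    ultimately have "tword (i+n) = tword (i+n+p)" unfolding per_def by simp
    then show False using mis by simp
  qed
  define m where "m = (LEAST l. tword (j+l) \<noteq> tword (j+l+q))"
  have mism: "tword (j+m) \<noteq> tword (j+m+q)" unfolding m_def using ex by (rule LeastI_ex)
  have perj: "per j q m" unfolding per_def m_def using not_less_Least by blast
  define D where "D = Phi (j+m) - Phi j"
  have geD: "Phi j \<le> Phi (j+m)" by (simp add: Phi_le_iff)
  have t1: "per i p (D + 1)" using T1[OF perj] pq j D_def by simp
  have t1': "Phi (j+m+q) = Phi (j+m) + p" using T1'[OF perj] pq by simp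
  have nge: "n \<ge> D + 1"
  proof (rule ccontr)
    assume "\<not> ?thesis"
    then have "tword (i+n) = tword (i+n+p)" using t1 unfolding per_def by simp
    then show False using mis by simp
  qed
  have nle: "n \<le> D + 1"
  proof (rule ccontr)
    assume "\<not> ?thesis"
    then have "D + 1 < n" by simp
    then have "tword (i + (D+1)) = tword (i + (D+1) + p)" using per unfolding per_def by blast
    moreover have "i + (D+1) = Suc (Phi (j+m))" using j geD D_def by simp
    ultimately have "tword (Suc (Phi (j+m))) = tword (Suc (Phi (j+m+q)))" using t1' by simp
    then show False using mism by (simp add: tword_Phi1S nl_inj)
  qed
  have nD: "n = D + 1" using nge nle by simp
  have lfj: "j = 0 \<or> tword (j-1) \<noteq> tword (j-1+q)"
  proof (rule ccontr)
    assume h: "\<not> ?thesis"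
    then obtain j' where j': "j = Suc j'" by (cases j) auto
    have "tword j' = tword (j'+q)" using h j' by simp
    then have "nl (tword j') = nl (tword (j'+q))" by simp
    then have "tword (Phi (Suc j') - 1) = tword (Phi (Suc (j'+q)) - 1)" by (simp only: tword_Phi_last)
    moreover have "Phi (Suc (j'+q)) = i + p" using jq j j' by simp
    moreover have "0 < i" using j j' Phi_ge[of j] by simp
    ultimately have "tword (i-1) = tword (i-1+p)" using j j' by simp
    moreover have "i \<noteq> 0" using \<open>0 < i\<close> by simp
    ultimately show False using lf by simp
  qed
  have mrj: "maxrun j q m" using q0 perj mism lfj by (simp add: maxrun_def)
  have qp: "q < p"
  proof (cases "q = 1")
    case True then show ?thesis using p2 by simp
  next
    case False
    then have q2: "q \<ge> 2" using q0 by simp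
    have e: "j + q = j + 2 + (q-2)" using q2 by simp
    have "Phi (j+q) \<ge> Phi (j+2) + (q-2)" unfolding e by (rule Phi_add_ge)
    moreover have "Phi (j+2) \<ge> Phi j + 3" by (rule Phi_two)
    ultimately show ?thesis using jq q2 by linarith
  qed
  have qm: "2*q \<le> m+1"
  proof (rule ccontr)
    assume h: "\<not> ?thesis"
    have b2: "2*p \<le> D + 2" using big nD by simp
    show False
    proof (cases "m < q")
      case True
      then have "Phi (j+m) < Phi (j+q)" by (simp add: Phi_less_iff)
      then have "D < p" using jq D_def geD by linarith
      then show False using b2 p2 by simp
    next
      case False
      have pm: "per j q (m-q)" using perj per_mono by simp
      from T1'[OF pm] have "Phi (j+(m-q)+q) = Phi (j+(m-q)) + p" using pq by simp
      moreover have "j+(m-q)+q = j+m" using False by simp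
      ultimately have e: "Phi (j+m) = Phi (j+(m-q)) + p" by simp
      have q2: "q \<ge> 2" using False h by simp
      have "j + (m-q) \<le> j + (q-2)" using h False by simp
      then have "Phi (j+(m-q)) \<le> Phi (j+(q-2))" by (simp add: Phi_le_iff)
      moreover have "Phi (j+q) \<ge> Phi (j+(q-2)) + 3"
      proof -
        have e: "j + q = j+(q-2)+2" using q2 by simp
        show ?thesis unfolding e by (rule Phi_two)
      qed
      moreover have "Phi j \<le> Phi (j + (m-q))" by (simp add: Phi_le_iff)
      ultimately show False using e jq b2 D_def by simp
    qed
  qed
  show ?thesis using j jq mrj nD D_def qp qm by blast
qed



lemma W5: "W 5 = [A,B,A,C,A,B,A,A,B,A,C,A,B,A,B,A,C,A,B,A,A,B,A,C]"
  by (simp add: numeral_eq_Suc)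

lemma trib5: "trib 5 = 24" using W5 len_W[of 5] by simp

lemma tword_small: "i < 24 \<Longrightarrow> tword i = [A,B,A,C,A,B,A,A,B,A,C,A,B,A,B,A,C,A,B,A,A,B,A,C] ! i"
  using tword_W[of i 5] trib5 W5 by simp

lemma tw0: "tword 0 = A" "tword 1 = B" "tword 2 = A" "tword 3 = C" "tword 4 = A"
  "tword 5 = B" "tword 6 = A" "tword 7 = A" "tword 8 = B"
  by (simp_all add: tword_small)

lemma tw0S: "tword (Suc 0) = B" "tword (Suc (Suc 0)) = A"
  using tw0(2,3) by (simp_all add: numeral_2_eq_2)

fun sk :: "nat \<Rightarrow> nat" where
  "sk 0 = 6" | "sk (Suc k) = Phi (sk k)"

fun Nk :: "nat \<Rightarrow> nat" where
  "Nk 0 = 1" | "Nk (Suc k) = Phi (sk k + Nk k) - Phi (sk k) + 1"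

lemma FAM: "maxrun (sk k) (trib k) (Nk k) \<and> seg (sk k) (trib k) = W k"
proof (induction k)
  case 0
  have "maxrun 6 1 1" using tw0 by (simp add: maxrun_def per_def)
  moreover have "seg 6 1 = [A]" using tw0 by (simp add: seg_def)
  ultimately show ?case using trib_012 by simp
next
  case (Suc k)
  then have mr: "maxrun (sk k) (trib k) (Nk k)" and sg: "seg (sk k) (trib k) = W k" by auto
  have e1: "Phi (sk k + trib k) = Phi (sk k) + trib (Suc k)"
    using seg_Phi[of "sk k" "trib k"] sg len_W[of "Suc k"] by simp
  have e2': "seg (Phi (sk k)) (Phi (sk k + trib k) - Phi (sk k)) = sigma (seg (sk k) (trib k))"
    using seg_Phi by blast
  have e2: "seg (Phi (sk k)) (trib (Suc k)) = W (Suc k)"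
    using e2' e1 sg by simp
  from FM[OF mr] have "maxrun (Phi (sk k)) (trib (Suc k)) (Nk (Suc k))" using e1 by simp
  with e2 show ?case by simp
qed

lemma AA_ge6: "tword i = A \<Longrightarrow> tword (Suc i) = A \<Longrightarrow> 6 \<le> i"
proof (rule ccontr)
  assume h: "tword i = A" "tword (Suc i) = A" "\<not> 6 \<le> i"
  then have "i = 0 \<or> i = 1 \<or> i = 2 \<or> i = 3 \<or> i = 4 \<or> i = 5" by auto
  then show False using h by (elim disjE) (simp_all add: tw0 tw0S)
qed

theorem NC:
  "maxrun i p n \<Longrightarrow> 2*p \<le> n+1 \<Longrightarrow>
   \<exists>k. p = trib k \<and> n = Nk k \<and> sk k \<le> i \<and> seg i (Nk k + trib k) = seg (sk k) (Nk k + trib k)"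
proof (induction p arbitrary: i n rule: less_induct)
  case (less p)
  have mr: "maxrun i p n" and big: "2*p \<le> n+1" by fact+
  have p0: "0 < p" and per: "per i p n" and mis: "tword (i+n) \<noteq> tword (i+n+p)"
    using mr by (auto simp: maxrun_def)
  show ?case
  proof (cases "p = 1")
    case True
    have n1: "1 \<le> n" using big True by simp
    have "0 < n" using n1 by simp
    from per[unfolded per_def, rule_format, OF this] have e: "tword i = tword (Suc i)" using True by simp
    have iA: "tword i = A"
    proof (rule ccontr)
      assume "tword i \<noteq> A"
      then show False using tword_nonA[of i] e by simp
    qed
    have i1A: "tword (Suc i) = A" using iA e by simp
    have nn: "n = 1"
    proof (rule ccontr)
      assume "n \<noteq> 1"
      then have "1 < n" using n1 by simp
      then have "tword (i+1) = tword (i+1+1)" using per True unfolding per_def by blast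
      then show False using no_AAA[of i] iA i1A by simp
    qed
    have i6: "6 \<le> i" using AA_ge6 iA i1A by blast
    have "seg i (Suc (Suc 0)) = seg 6 (Suc (Suc 0))" using iA i1A tw0 by (simp add: seg_def)
    then show ?thesis using True nn i6 trib_012 by (intro exI[of _ 0]) simp
  next
    case False
    then have p2: "2 \<le> p" using p0 by simp
    from BM[OF mr p2 big] obtain j q m where
      j: "i = Phi j" and jq: "Phi (j+q) = Phi j + p" and mrj: "maxrun j q m"
      and nm: "n = Phi (j+m) - Phi j + 1" and qp: "q < p" and qm: "2*q \<le> m+1" by blast
    from less.IH[OF qp mrj qm] obtain k where
      k: "q = trib k" "m = Nk k" "sk k \<le> j" and sg: "seg j (Nk k + trib k) = seg (sk k) (Nk k + trib k)"
      by blast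
    have perj: "per j q m" using mrj by (simp add: maxrun_def)
    have sgt: "seg j (trib k) = seg (sk k) (trib k)"
      using sg seg_add[of j "trib k" "Nk k"] seg_add[of "sk k" "trib k" "Nk k"] by (simp add: add.commute)
    have sgN: "seg j (Nk k) = seg (sk k) (Nk k)"
      using sg seg_add[of j "Nk k" "trib k"] seg_add[of "sk k" "Nk k" "trib k"] by simp
    have fam: "Phi (sk k + trib k) = Phi (sk k) + trib (Suc k)"
      using seg_Phi[of "sk k" "trib k"] FAM[of k] len_W[of "Suc k"] by simp
    have pk: "p = trib (Suc k)"
      using seg_eq_Phi[OF sgt] jq fam k by simp
    have nk: "n = Nk (Suc k)"
      using seg_eq_Phi[OF sgN] nm k by simp
    have sk: "sk (Suc k) \<le> i" using j k by (simp add: Phi_le_iff)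
    have L: "Phi (j + (Nk k + trib k)) - Phi j + 1 = Nk (Suc k) + trib (Suc k)"
    proof -
      have "Phi (j + m + q) = Phi (j+m) + p" using T1'[OF perj] jq by simp
      moreover have "Phi j \<le> Phi (j+m)" by (simp add: Phi_le_iff)
      ultimately show ?thesis using nm nk pk k by (simp add: add.commute add.left_commute)
    qed
    have "seg (Phi j) (Phi (j + (Nk k + trib k)) - Phi j + 1) =
          seg (Phi (sk k)) (Phi (sk k + (Nk k + trib k)) - Phi (sk k) + 1)"
      using seg_eq_Phi[OF sg] by blast
    moreover have "Phi (sk k + (Nk k + trib k)) - Phi (sk k) = Phi (j + (Nk k + trib k)) - Phi j"
      using seg_eq_Phi[OF sg] by simp
    ultimately have "seg i (Nk (Suc k) + trib (Suc k)) = seg (sk (Suc k)) (Nk (Suc k) + trib (Suc k))"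
      using L j by simp
    then show ?thesis using pk nk sk by blast
  qed
qed



lemma qp_lemma:
  assumes "Phi (j+q) = Phi j + p" "2 \<le> p" "0 < q"
  shows "q < p"
proof (cases "q = 1")
  case True then show ?thesis using assms by simp
next
  case False
  then have q2: "q \<ge> 2" using assms by simp
  have e: "j + q = j + 2 + (q-2)" using q2 by simp
  have "Phi (j+q) \<ge> Phi (j+2) + (q-2)" unfolding e by (rule Phi_add_ge)
  moreover have "Phi (j+2) \<ge> Phi j + 3" by (rule Phi_two)
  ultimately show ?thesis using assms q2 by linarith
qed

lemma NoInf: "0 < p \<Longrightarrow> \<not> (\<forall>l. tword (i+l) = tword (i+l+p))"
proof (induction p arbitrary: i rule: less_induct)
  case (less p)
  show ?case
  proof
    assume h: "\<forall>l. tword (i+l) = tword (i+l+p)"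
    show False
    proof (cases "p = 1")
      case True
      have e: "\<And>l. tword (i+l) = tword (i+Suc l)" using h True by simp
      have iA: "tword i = A"
      proof (rule ccontr)
        assume "tword i \<noteq> A"
        then show False using tword_nonA[of i] e[of 0] by simp
      qed
      have "tword (i+1) = A" using e[of 0] iA by simp
      moreover have "tword (i+2) = A" using e[of 1] e[of 0] iA by (simp add: numeral_2_eq_2)
      ultimately show False using no_AAA[of i] iA by simp
    next
      case False
      then have p2: "2 \<le> p" using less.prems by simp
      obtain i' where i': "i \<le> i'" "tword i' = A"
      proof (cases "tword i = A")
        case True then show ?thesis using that by blast
      next
        case False then show ?thesis using that[of "Suc i"] tword_nonA[of i] by simp
      qed
      have h': "\<forall>l. tword (i'+l) = tword (i'+l+p)"
      proof
        fix l show "tword (i'+l) = tword (i'+l+p)" using h[rule_format, of "i'-i+l"] i' by simp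
      qed
      obtain j where j: "i' = Phi j" using i' tword_A_Phi by blast
      have "tword (i'+p) = A" using h'[rule_format, of 0] i' by simp
      then obtain j2 where j2: "i' + p = Phi j2" using tword_A_Phi by blast
      have "Phi j < Phi j2" using j j2 p2 by simp
      then have jj2: "j < j2" by (simp add: Phi_less_iff)
      define q where "q = j2 - j"
      have jq: "Phi (j+q) = Phi j + p" using j j2 jj2 q_def by simp
      have q0: "0 < q" using jj2 q_def by simp
      have qp: "q < p" using qp_lemma[OF jq p2 q0] .
      have "\<forall>l. tword (j+l) = tword (j+l+q)"
      proof
        fix l
        have per: "per (Phi j) p (Phi (j+l) + 2)" using h' j by (simp add: per_def)
        have "Phi (j+l) + 1 < Phi j + (Phi (j+l) + 2)" by simp
        then show "tword (j+l) = tword (j+l+q)" using BackT[OF per jq] by blast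
      qed
      then show False using less.IH[OF qp q0] by blast
    qed
  qed
qed

lemma extend:
  assumes cube: "per i p (2*p)" and p0: "0 < p"
  shows "\<exists>i0 n0. maxrun i0 p n0 \<and> i0 \<le> i \<and> i + 2*p \<le> i0 + n0"
proof -
  define P where "P x \<longleftrightarrow> x \<le> i \<and> per x p (i + 2*p - x)" for x
  have Pi: "P i" using cube by (simp add: P_def)
  define i0 where "i0 = (LEAST x. P x)"
  have Pi0: "P i0" unfolding i0_def using Pi by (rule LeastI)
  have i0i: "i0 \<le> i" using Pi0 P_def by simp
  have per0: "per i0 p (i + 2*p - i0)" using Pi0 P_def by simp
  have lf: "i0 = 0 \<or> tword (i0-1) \<noteq> tword (i0-1+p)"
  proof (rule ccontr)
    assume h: "\<not> ?thesis"
    then have pos: "0 < i0" by simp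
    have "P (i0 - 1)"
      unfolding P_def per_def
    proof (intro conjI allI impI)
      show "i0 - 1 \<le> i" using i0i by simp
    next
      fix l assume l: "l < i + 2*p - (i0 - 1)"
      show "tword (i0 - 1 + l) = tword (i0 - 1 + l + p)"
      proof (cases l)
        case 0 then show ?thesis using h by simp
      next
        case (Suc l')
        then have "l' < i + 2*p - i0" using l pos i0i by simp
        then have "tword (i0 + l') = tword (i0 + l' + p)" using per0 unfolding per_def by blast
        then show ?thesis using Suc pos by simp
      qed
    qed
    then have "i0 \<le> i0 - 1" unfolding i0_def by (rule Least_le)
    then show False using pos by simp
  qed
  obtain l where l: "tword (i0+l) \<noteq> tword (i0+l+p)" using NoInf[OF p0, of i0] by blast
  define n0 where "n0 = (LEAST l. tword (i0+l) \<noteq> tword (i0+l+p))"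
  have mis: "tword (i0+n0) \<noteq> tword (i0+n0+p)" unfolding n0_def using l by (rule LeastI)
  have pern: "per i0 p n0" unfolding per_def n0_def using not_less_Least by blast
  have "i + 2*p - i0 \<le> n0"
  proof (rule ccontr)
    assume "\<not> ?thesis"
    then have "tword (i0+n0) = tword (i0+n0+p)" using per0 unfolding per_def by simp
    then show False using mis by simp
  qed
  then have "i + 2*p \<le> i0 + n0" using i0i by simp
  moreover have "maxrun i0 p n0" using p0 pern mis lf by (simp add: maxrun_def)
  ultimately show ?thesis using i0i by blast
qed

lemma cube_char:
  assumes cube: "per i p (2*p)" and p0: "0 < p"
  shows "\<exists>k r. p = trib k \<and> r + 2 * trib k \<le> Nk k \<and> sk k + r \<le> i \<and> seg i p = seg (sk k + r) p"
proof -
  obtain i0 n0 where mr: "maxrun i0 p n0" and i0: "i0 \<le> i" and n0: "i + 2*p \<le> i0 + n0"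
    using extend[OF cube p0] by blast
  have "2*p \<le> n0 + 1" using i0 n0 by simp
  from NC[OF mr this] obtain k where k: "p = trib k" "n0 = Nk k" "sk k \<le> i0"
    and sg: "seg i0 (Nk k + trib k) = seg (sk k) (Nk k + trib k)" by blast
  define r where "r = i - i0"
  have r1: "r + 2 * trib k \<le> Nk k" using n0 k i0 r_def by simp
  have "seg i p = seg (sk k + r) p"
    unfolding seg_eq_iff
  proof (intro allI impI)
    fix l assume l: "l < p"
    have "r + l < Nk k + trib k" using r1 l k by simp
    then have "tword (i0 + (r+l)) = tword (sk k + (r+l))" using sg unfolding seg_eq_iff by blast
    then show "tword (i + l) = tword (sk k + r + l)" using r_def i0 by (simp add: add.assoc)
  qed
  then show ?thesis using k r1 r_def i0 by (intro exI[of _ k] exI[of _ r]) simp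
qed



declare Nk.simps(2)[simp del] sk.simps(2)[simp del]

definition cnt :: "letter \<Rightarrow> letter list \<Rightarrow> nat" where
  "cnt x xs = length (filter ((=) x) xs)"

lemma cnt_simps[simp]: "cnt x [] = 0" "cnt x (y # ys) = (if x = y then 1 else 0) + cnt x ys"
  "cnt x (xs @ ys) = cnt x xs + cnt x ys"
  by (auto simp: cnt_def)

lemma cnt_sigmaA: "cnt A (sigma xs) = length xs"
  by (induction xs) (simp, case_tac a, auto)
lemma cnt_sigmaB: "cnt B (sigma xs) = cnt A xs"
  by (induction xs) (simp, case_tac a, auto)
lemma cnt_sigmaC: "cnt C (sigma xs) = cnt B xs"
  by (induction xs) (simp, case_tac a, auto)
lemmas cnt_sigma = cnt_sigmaA cnt_sigmaB cnt_sigmaC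

lemma len_cnt: "length xs = cnt A xs + cnt B xs + cnt C xs"
  by (induction xs) (simp, case_tac a, auto)

lemma segPhi1: "seg (Phi a) (Phi (a+L) - Phi a + 1) = sigma (seg a L) @ [A]"
proof -
  have ge: "Phi a \<le> Phi (a+L)" by (simp add: Phi_le_iff)
  have "seg (Phi a) (Phi (a+L) - Phi a + 1) = seg (Phi a) (Phi (a+L) - Phi a) @ seg (Phi (a+L)) 1"
    using seg_add[of "Phi a" "Phi (a+L) - Phi a" 1] ge by simp
  moreover have "seg (Phi (a+L)) 1 = [A]" by (simp add: seg_def tword_Phi)
  moreover have "seg (Phi a) (Phi (a+L) - Phi a) = sigma (seg a L)" using seg_Phi by blast
  ultimately show ?thesis by simp
qed

definition R :: "nat \<Rightarrow> letter list" where "R k = seg (sk k) (Nk k)"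

lemma R_Suc: "R (Suc k) = sigma (R k) @ [A]"
  unfolding R_def using segPhi1[of "sk k" "Nk k"] by (simp add: sk.simps Nk.simps)

lemma len_R: "length (R k) = Nk k" by (simp add: R_def)

lemma R0: "R 0 = [A]" by (simp add: R_def seg_def tw0)

lemma cntR: "cnt A (R (Suc k)) = Nk k + 1" "cnt B (R (Suc k)) = cnt A (R k)" "cnt C (R (Suc k)) = cnt B (R k)"
  by (simp_all add: R_Suc cnt_sigma len_R)

lemma Nk_rec: "Nk (k+3) = Nk (k+2) + Nk (k+1) + Nk k + 3"
proof -
  have "Nk (k+3) = cnt A (R (k+3)) + cnt B (R (k+3)) + cnt C (R (k+3))" using len_cnt len_R by metis
  also have "\<dots> = (Nk (k+2) + 1) + cnt A (R (k+2)) + cnt B (R (k+2))"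
    using cntR[of "k+2"] by (simp add: numeral_3_eq_3)
  also have "\<dots> = (Nk (k+2) + 1) + (Nk (k+1) + 1) + cnt A (R (k+1))"
    using cntR[of "k+1"] by (simp add: numeral_2_eq_2)
  also have "\<dots> = (Nk (k+2) + 1) + (Nk (k+1) + 1) + (Nk k + 1)"
    using cntR[of "k"] by simp
  finally show ?thesis by simp
qed

lemma Nk_012: "Nk 0 = 1" "Nk 1 = 3" "Nk 2 = 7"
proof -
  show "Nk 0 = 1" by simp
  have r1: "R 1 = [A,B,A]" using R_Suc[of 0] R0 by simp
  then show "Nk 1 = 3" using len_R[of 1] by simp
  have "R 2 = [A,B,A,C,A,B,A]" using R_Suc[of 1] r1 by (simp add: numeral_2_eq_2)
  then show "Nk 2 = 7" using len_R[of 2] by simp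
qed

lemma Nk_012S: "Nk (Suc 0) = 3" "Nk (Suc (Suc 0)) = 7"
  using Nk_012 by (simp_all add: numeral_2_eq_2)

lemma trib3: "trib 3 = 7" by (simp add: trib_def numeral_eq_Suc)
lemma trib4: "trib 4 = 13" by (simp add: trib_def numeral_eq_Suc)

lemma Nk_closed: "2 * Nk (k+3) + trib k + 3 = 4 * trib (k+3) + trib (k+2)"
proof (induction k rule: less_induct)
  case (less k)
  show ?case
  proof (cases "k < 3")
    case True
    have N3: "Nk 3 = 14" using Nk_rec[of 0] Nk_012 by (simp add: numeral_eq_Suc)
    have N4: "Nk 4 = 27" using Nk_rec[of 1] Nk_012 N3 by (simp add: numeral_eq_Suc)
    have N5: "Nk 5 = 51" using Nk_rec[of 2] Nk_012 N3 N4 by (simp add: numeral_eq_Suc)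
    have "k = 0 \<or> k = 1 \<or> k = 2" using True by auto
    then show ?thesis using N3 N4 N5 trib_012 trib3 trib4 trib5 by (auto simp: numeral_eq_Suc)
  next
    case False
    then obtain j where j: "k = j + 3" by (metis add.commute le_Suc_ex not_less)
    have i0: "2 * Nk (j+3) + trib j + 3 = 4 * trib (j+3) + trib (j+2)" using less.IH[of j] j by simp
    have i1: "2 * Nk (j+1+3) + trib (j+1) + 3 = 4 * trib (j+1+3) + trib (j+1+2)" using less.IH[of "j+1"] j by simp
    have i2: "2 * Nk (j+2+3) + trib (j+2) + 3 = 4 * trib (j+2+3) + trib (j+2+2)" using less.IH[of "j+2"] j by simp
    have r: "Nk (j+3+3) = Nk (j+3+2) + Nk (j+3+1) + Nk (j+3) + 3" using Nk_rec[of "j+3"] .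
    have t1: "trib (j+3) = trib (j+2) + trib (j+1) + trib j" using trib_rec[of j] .
    have t2: "trib (j+3+3) = trib (j+3+2) + trib (j+3+1) + trib (j+3)" using trib_rec[of "j+3"] .
    have t3: "trib (j+3+2) = trib (j+2+2) + trib (j+1+2) + trib (j+2)" using trib_rec[of "j+2"] by (simp add: ac_simps)
    have e1: "j+1+3 = j+3+1" "j+2+3 = j+3+2" "j+1+2 = j+3" "j+2+2 = j+3+1" by simp_all
    show ?thesis using i0 i1 i2 r t1 t2 t3 j unfolding e1 by simp
  qed
qed

lemma Nk_small_lt: "k < 3 \<Longrightarrow> Nk k < 2 * trib k"
proof -
  assume "k < 3"
  then have "k = 0 \<or> k = 1 \<or> k = 2" by auto
  then show ?thesis using Nk_012 trib_012 by auto
qed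

lemma trib_rec': "trib (Suc (Suc (Suc n))) = trib (Suc (Suc n)) + trib (Suc n) + trib n"
  using trib_rec[of n] by (simp add: numeral_eq_Suc)

lemma trib_gap: "trib (j+2) \<ge> trib j + 3"
proof (cases j)
  case 0 then show ?thesis using trib_012 trib_2S by simp
next
  case (Suc i)
  have "trib (i+3) = trib (i+2) + trib (i+1) + trib i" by (rule trib_rec)
  moreover have "trib (i+2) \<ge> 3" using trib_ge[of "i+2"] by simp
  moreover have "trib i \<ge> 1" using trib_pos[of i] by simp
  ultimately show ?thesis using Suc by (simp add: numeral_eq_Suc)
qed

lemma Nk_bounds: "3 \<le> k \<Longrightarrow> 2 * trib k \<le> Nk k \<and> Nk k < 3 * trib k"
proof -
  assume "3 \<le> k"
  then obtain j where j: "k = j + 3" by (metis add.commute le_Suc_ex)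
  have c: "2 * Nk (j+3) + trib j + 3 = 4 * trib (j+3) + trib (j+2)" by (rule Nk_closed)
  have g: "trib (j+2) \<ge> trib j + 3" by (rule trib_gap)
  have l: "trib (j+2) < trib (j+3)" using trib_less_iff by simp
  show ?thesis using c g l j by simp
qed

lemma Nk_le: "Nk k \<le> trib (k+2) + trib (k+1)"
proof (cases "k < 3")
  case True
  then have "k = 0 \<or> k = 1 \<or> k = 2" by auto
  then show ?thesis using Nk_012 trib_012 trib3 trib4 by (auto simp: numeral_eq_Suc)
next
  case False
  then have "Nk k < 3 * trib k" using Nk_bounds by simp
  moreover obtain j where j: "k = Suc (Suc (Suc j))"
  proof -
    obtain j where "k = j + 3" using False by (metis add.commute le_Suc_ex not_less)
    then show ?thesis using that by simp
  qed
  ultimately show ?thesis by (simp add: trib_rec')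
qed

lemma trib_Suc_lt2: "3 \<le> k \<Longrightarrow> trib (k+1) < 2 * trib k"
proof -
  assume "3 \<le> k"
  then obtain j0 where "k = j0 + 3" by (metis add.commute le_Suc_ex)
  then obtain j where j: "k = Suc (Suc (Suc j))" by simp
  have "trib j > 0" by (rule trib_pos)
  then show ?thesis using j by (simp add: trib_rec')
qed

lemma tprefix_take: "m \<le> n \<Longrightarrow> tprefix m = take m (tprefix n)"
  by (simp add: tprefix_def take_map)

lemma sk_closed: "sk k + trib k = trib (k+3)"
proof (induction k)
  case 0 then show ?case using trib3 trib_012 by simp
next
  case (Suc k)
  have ww: "tprefix (trib (k+3)) = W (k+2) @ W (k+1) @ W k" using tprefix_trib W_rec by simp
  have "tprefix (sk k) = take (sk k) (tprefix (trib (k+3)))" using Suc tprefix_take by simp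
  also have "\<dots> = W (k+2) @ W (k+1)"
  proof -
    have "length (W (k+2) @ W (k+1)) = trib (k+2) + trib (k+1)" by (simp only: length_append len_W)
    moreover have "trib (k+3) = trib (k+2) + trib (k+1) + trib k" by (rule trib_rec)
    ultimately have "sk k = length (W (k+2) @ W (k+1))" using Suc.IH by linarith
    then show ?thesis using ww by simp
  qed
  finally have tp: "tprefix (sk k) = W (k+2) @ W (k+1)" .
  have "sk (Suc k) = Phi (sk k)" by (simp add: sk.simps)
  also have "\<dots> = length (sigma (W (k+2) @ W (k+1)))" using tp by (simp add: Phi_def)
  also have "\<dots> = trib (k+3) + trib (k+2)"
  proof -
    have "sigma (W (k+2) @ W (k+1)) = W (k+3) @ W (k+2)" by (simp add: numeral_eq_Suc)
    then show ?thesis by (simp only: length_append len_W)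
  qed
  finally have a: "sk (Suc k) = trib (k+3) + trib (k+2)" .
  have e1: "Suc k + 2 = k + 3" "Suc k + 1 = k + 2" by simp_all
  have "trib (Suc k + 3) = trib (Suc k + 2) + trib (Suc k + 1) + trib (Suc k)" by (rule trib_rec)
  then have "trib (Suc k + 3) = trib (k + 3) + trib (k + 2) + trib (Suc k)" by (simp only: e1)
  then show ?case using a by linarith
qed



lemma seg_take_drop: "i + l \<le> n \<Longrightarrow> seg i l = take l (drop i (tprefix n))"
  by (auto simp: list_eq_iff_nth_eq seg_nth tprefix_nth)

lemma sublist_tprefix:
  "sublist x (tprefix n) \<longleftrightarrow> (\<exists>i. i + length x \<le> n \<and> x = seg i (length x))"
proof
  assume "sublist x (tprefix n)"
  then obtain ps ss where e: "tprefix n = ps @ x @ ss" by (auto simp: sublist_def)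
  have le: "length ps + length x \<le> n" using arg_cong[OF e, of length] by simp
  have "take (length x) (drop (length ps) (tprefix n)) = x" using e by simp
  then show "\<exists>i. i + length x \<le> n \<and> x = seg i (length x)"
    using seg_take_drop[OF le] le by metis
next
  assume "\<exists>i. i + length x \<le> n \<and> x = seg i (length x)"
  then obtain i where i: "i + length x \<le> n" "x = seg i (length x)" by blast
  let ?ys = "tprefix n"
  have "?ys = take i ?ys @ drop i ?ys" by simp
  also have "drop i ?ys = take (length x) (drop i ?ys) @ drop (length x) (drop i ?ys)"
    by (rule append_take_drop_id[symmetric])
  finally have "?ys = take i ?ys @ x @ drop (length x) (drop i ?ys)"
    using seg_take_drop[OF i(1)] i(2) by simp
  then show "sublist x (tprefix n)" unfolding sublist_def by blast
qed

lemma cube_seg: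
  "seg i (3 * length u) = u @ u @ u \<longleftrightarrow> u = seg i (length u) \<and> per i (length u) (2 * length u)"
proof -
  let ?p = "length u"
  have s3: "seg i (3 * ?p) = seg i ?p @ seg (i + ?p) ?p @ seg (i + ?p + ?p) ?p"
    using seg_add[of i ?p "?p + ?p"] seg_add[of "i + ?p" ?p ?p] by (simp add: numeral_3_eq_3)
  have s2: "seg i (2 * ?p) = seg i ?p @ seg (i + ?p) ?p" "seg (i + ?p) (2 * ?p) = seg (i + ?p) ?p @ seg (i + ?p + ?p) ?p"
    using seg_add[of i ?p ?p] seg_add[of "i + ?p" ?p ?p] by (simp_all add: mult_2)
  have "per i ?p (2 * ?p) \<longleftrightarrow> seg i ?p = seg (i + ?p) ?p \<and> seg (i + ?p) ?p = seg (i + ?p + ?p) ?p"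
    unfolding per_seg s2 by simp
  then show ?thesis unfolding s3 by auto
qed

definition Iset :: "nat \<Rightarrow> (nat \<times> nat) set" where
  "Iset m = {(k, r). 3 \<le> k \<and> k + 4 \<le> m \<and> r + 2 * trib k \<le> Nk k}"

definition froot :: "nat \<times> nat \<Rightarrow> letter list" where
  "froot kr = seg (sk (fst kr) + snd kr) (trib (fst kr))"

lemma cubes_eq: "{w. w \<noteq> [] \<and> sublist (w @ w @ w) (tprefix (trib m))} = froot ` Iset m"
proof (intro equalityI subsetI)
  fix u assume "u \<in> {w. w \<noteq> [] \<and> sublist (w @ w @ w) (tprefix (trib m))}"
  then have u0: "u \<noteq> []" and sl: "sublist (u @ u @ u) (tprefix (trib m))" by auto
  let ?p = "length u"
  from sl obtain i where i0: "i + length (u @ u @ u) \<le> trib m" "u @ u @ u = seg i (length (u @ u @ u))"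
    unfolding sublist_tprefix by blast
  have l3: "length (u @ u @ u) = 3 * ?p" by simp
  have i: "i + 3 * ?p \<le> trib m" "u @ u @ u = seg i (3 * ?p)" using i0 unfolding l3 by auto
  then have ui: "u = seg i ?p" and per: "per i ?p (2 * ?p)" using cube_seg by metis+
  have p0: "0 < ?p" using u0 by simp
  from cube_char[OF per p0] obtain k r where
    k: "?p = trib k" "r + 2 * trib k \<le> Nk k" "sk k + r \<le> i" "seg i ?p = seg (sk k + r) ?p" by blast
  have k3: "3 \<le> k" using Nk_small_lt[of k] k(2) by (cases "k < 3") auto
  have "sk k + trib k + 2 * trib k \<le> trib m" using i k by simp
  then have "trib (k+3) < trib m" using sk_closed[of k] trib_pos[of k] by simp
  then have "k + 3 < m" using trib_less_iff by blast
  then have "(k, r) \<in> Iset m" using k3 k by (simp add: Iset_def)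
  moreover have "u = froot (k, r)" using ui k by (simp add: froot_def)
  ultimately show "u \<in> froot ` Iset m" by blast
next
  fix u assume "u \<in> froot ` Iset m"
  then obtain kr0 where "kr0 \<in> Iset m" "u = froot kr0" by blast
  then obtain k r where kr: "(k, r) \<in> Iset m" and u: "u = froot (k, r)" by (cases kr0) auto
  have k: "3 \<le> k" "k + 4 \<le> m" "r + 2 * trib k \<le> Nk k" using kr by (auto simp: Iset_def)
  let ?t = "trib k"
  have lu: "length u = ?t" using u by (simp add: froot_def)
  have perk: "per (sk k) ?t (Nk k)" using FAM[of k] by (simp add: maxrun_def)
  have per: "per (sk k + r) ?t (2 * ?t)"
    unfolding per_def
  proof (intro allI impI)
    fix l assume "l < 2 * ?t"
    then have "r + l < Nk k" using k by simp
    then have "tword (sk k + (r + l)) = tword (sk k + (r + l) + ?t)" using perk unfolding per_def by blast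
    then show "tword (sk k + r + l) = tword (sk k + r + l + ?t)" by (simp add: add.assoc)
  qed
  have "u @ u @ u = seg (sk k + r) (3 * length u)"
    using cube_seg[of "sk k + r" u] per lu u by (simp add: froot_def)
  moreover have "sk k + r + 3 * length u \<le> trib m"
  proof -
    have "Nk k \<le> trib (k+2) + trib (k+1)" by (rule Nk_le)
    moreover have "trib (k+4) = trib (k+3) + trib (k+2) + trib (k+1)"
    proof -
      have e: "k+1+3 = k+4" "k+1+2 = k+3" "k+1+1 = k+2" by simp_all
      show ?thesis using trib_rec[of "k+1"] unfolding e .
    qed
    moreover have "trib (k+4) \<le> trib m" using k trib_mono by simp
    moreover have "sk k + trib k = trib (k+3)" by (rule sk_closed)
    ultimately show ?thesis using k lu by linarith
  qed
  moreover have "u \<noteq> []" using lu trib_pos[of k] by auto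
  ultimately have "u \<noteq> [] \<and> sublist (u @ u @ u) (tprefix (trib m))"
    unfolding sublist_tprefix
    by (metis length_append mult_2 mult_Suc numeral_3_eq_3 numeral_2_eq_2)
  then show "u \<in> {w. w \<noteq> [] \<and> sublist (w @ w @ w) (tprefix (trib m))}" by simp
qed



lemma root_distinct:
  assumes k3: "3 \<le> k" and rr: "r < r'" and r': "r' + 2 * trib k \<le> Nk k"
    and eq: "seg (sk k + r) (trib k) = seg (sk k + r') (trib k)"
  shows False
proof -
  let ?t = "trib k"
  define j where "j = sk k + r"
  define d where "d = r' - r"
  define M where "M = Nk k + ?t - r'"
  have perk: "per (sk k) ?t (Nk k)" using FAM[of k] by (simp add: maxrun_def)
  have bnd: "2 * ?t \<le> Nk k" "Nk k < 3 * ?t" using Nk_bounds[OF k3] by auto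
  have d0: "0 < d" using rr d_def by simp
  have dt: "d < ?t" using r' bnd d_def rr by simp
  have M3: "3 * ?t \<le> M" using r' M_def by simp
  have claim: "\<forall>l. l < M \<longrightarrow> tword (j+l) = tword (j+l+d)"
  proof (intro allI)
    fix l
    show "l < M \<longrightarrow> tword (j+l) = tword (j+l+d)"
    proof (induction l rule: less_induct)
      case (less l)
      show ?case
      proof
        assume lM: "l < M"
        show "tword (j+l) = tword (j+l+d)"
        proof (cases "l < ?t")
          case True
          then have "tword (sk k + r + l) = tword (sk k + r' + l)" using eq unfolding seg_eq_iff by blast
          then show ?thesis using j_def d_def rr by (simp add: ac_simps)
        next
          case False
          have o1: "r + l - ?t < Nk k" using False lM M_def rr r' by linarith
          have o2: "r' + l - ?t < Nk k" using False lM M_def rr r' by linarith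
          have a1: "tword (sk k + (r + l - ?t)) = tword (sk k + (r + l - ?t) + ?t)"
            using perk[unfolded per_def, rule_format, OF o1] .
          have a2: "tword (sk k + (r' + l - ?t)) = tword (sk k + (r' + l - ?t) + ?t)"
            using perk[unfolded per_def, rule_format, OF o2] .
          have ih: "tword (j + (l - ?t)) = tword (j + (l - ?t) + d)"
            using less.IH[of "l - ?t"] False lM trib_pos[of k] by simp
          have e1: "sk k + (r + l - ?t) + ?t = j + l" using j_def False by simp
          have e2: "sk k + (r' + l - ?t) + ?t = j + l + d" using j_def d_def False rr by simp
          have e3: "sk k + (r + l - ?t) = j + (l - ?t)" using j_def False by simp
          have e4: "sk k + (r' + l - ?t) = j + (l - ?t) + d" using j_def d_def False rr by simp
          show ?thesis using a1 a2 ih e1 e2 e3 e4 by simp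
        qed
      qed
    qed
  qed
  then have perM: "per j d M" by (simp add: per_def)
  have "per j d (2*d)" using per_mono[OF perM] M3 dt by simp
  from extend[OF this d0] obtain i0 n0 where mr: "maxrun i0 d n0" and i0: "i0 \<le> j" and
    cov: "j + 2*d \<le> i0 + n0" by blast
  have n0M: "j + M \<le> i0 + n0"
  proof (rule ccontr)
    assume "\<not> ?thesis"
    then have lt: "i0 + n0 - j < M" using cov by simp
    have "tword (j + (i0 + n0 - j)) = tword (j + (i0 + n0 - j) + d)" using perM lt unfolding per_def by blast
    moreover have "j + (i0 + n0 - j) = i0 + n0" using cov by simp
    ultimately have "tword (i0 + n0) = tword (i0 + n0 + d)" by simp
    then show False using mr by (simp add: maxrun_def)
  qed
  then have n03: "3 * ?t \<le> n0" using M3 i0 by simp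
  have "2 * d \<le> n0 + 1" using n03 dt by simp
  from NC[OF mr this] obtain k2 where k2: "d = trib k2" "n0 = Nk k2" by blast
  have "trib k2 < trib k" using k2 dt by simp
  then have kk: "k2 < k" using trib_less_iff by blast
  have "Nk k2 \<le> trib (k2+2) + trib (k2+1)" by (rule Nk_le)
  moreover have "trib (k2+2) \<le> trib (k+1)" "trib (k2+1) \<le> trib k" using kk trib_mono by simp_all
  moreover have "trib (k+1) < 2 * trib k" using trib_Suc_lt2[OF k3] .
  ultimately show False using n03 k2 by simp
qed

lemma froot_inj: "inj_on froot (Iset m)"
proof (rule inj_onI)
  fix x y assume x: "x \<in> Iset m" and y: "y \<in> Iset m" and e: "froot x = froot y"
  obtain k r where xk: "x = (k, r)" by (cases x)
  obtain k' r' where yk: "y = (k', r')" by (cases y)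
  have "trib k = trib k'" using arg_cong[OF e, of length] xk yk by (simp add: froot_def)
  then have kk: "k = k'" using trib_inj by blast
  have k3: "3 \<le> k" and b1: "r + 2 * trib k \<le> Nk k" and b2: "r' + 2 * trib k \<le> Nk k"
    using x y xk yk kk by (auto simp: Iset_def)
  have se: "seg (sk k + r) (trib k) = seg (sk k + r') (trib k)" using e xk yk kk by (simp add: froot_def)
  have "r = r'"
  proof (rule ccontr)
    assume "r \<noteq> r'"
    then have "r < r' \<or> r' < r" by auto
    then show False
    proof
      assume "r < r'" then show False using root_distinct[OF k3 _ b2 se] by blast
    next
      assume "r' < r" then show False using root_distinct[OF k3 _ b1 se[symmetric]] by blast
    qed
  qed
  then show "x = y" using xk yk kk by simp
qed

lemma le_Nk_iff: "3 \<le> k \<Longrightarrow> (r + 2 * trib k \<le> Nk k) = (r \<le> Nk k - 2 * trib k)"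
  using Nk_bounds[of k] by auto

lemma card_Iset: "card (Iset m) = (\<Sum>k\<in>{k. 3 \<le> k \<and> k + 4 \<le> m}. Nk k + 1 - 2 * trib k)"
proof -
  have e: "Iset m = (SIGMA k:{k. 3 \<le> k \<and> k + 4 \<le> m}. {..Nk k - 2 * trib k})"
    by (auto simp: Iset_def le_Nk_iff)
  have f: "finite {k. 3 \<le> k \<and> k + 4 \<le> m}" by (rule finite_subset[of _ "{..m}"]) auto
  show ?thesis unfolding e using f Nk_bounds
    by (intro trans[OF card_SigmaI] sum.cong) (auto simp: Suc_diff_le)
qed

lemma arith_aux: "2 * y1 + (y2 + 7) = y3 + y4 + (3::nat) \<Longrightarrow> y5 + 2 * y6 = y7 + 1 \<Longrightarrow>
  2 * y7 + y4 + 3 = 4 * y6 + y8 \<Longrightarrow> 2 * (y5 + y1) + (Suc y2 + 7) = y8 + y3 + 3"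
  by presburger

lemma sum_formula: "2 * (\<Sum>k\<in>{k. 3 \<le> k \<and> k + 4 \<le> M + 7}. Nk k + 1 - 2 * trib k) + (M + 7)
   = trib (M+2) + trib (M+1) + 3"
proof (induction M)
  case 0
  have e: "{k. 3 \<le> k \<and> k + 4 \<le> (0::nat) + 7} = {3}" by auto
  have N3: "Nk 3 = 14" using Nk_rec[of 0] Nk_012 by (simp add: numeral_eq_Suc)
  show ?case unfolding e using N3 trib3 trib_012 trib_2S by simp
next
  case (Suc M)
  have e: "{k. 3 \<le> k \<and> k + 4 \<le> Suc M + 7} = insert (M+4) {k. 3 \<le> k \<and> k + 4 \<le> M + 7}" by auto
  have f: "finite {k. 3 \<le> k \<and> k + 4 \<le> M + 7}" by (rule finite_subset[of _ "{..M+7}"]) auto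
  have nm: "M + 4 \<notin> {k. 3 \<le> k \<and> k + 4 \<le> M + 7}" by simp
  have c: "2 * Nk (M+1+3) + trib (M+1) + 3 = 4 * trib (M+1+3) + trib (M+1+2)" by (rule Nk_closed)
  have ee: "M+1+3 = M+4" "M+1+2 = M+3" by simp_all
  have c': "2 * Nk (M+4) + trib (M+1) + 3 = 4 * trib (M+4) + trib (M+3)" using c unfolding ee .
  have b: "2 * trib (M+4) \<le> Nk (M+4)" using Nk_bounds[of "M+4"] by simp
  have t': "trib (M+3) = trib (M+2) + trib (M+1) + trib M" by (rule trib_rec)
  have S: "(\<Sum>k\<in>{k. 3 \<le> k \<and> k + 4 \<le> Suc M + 7}. Nk k + 1 - 2 * trib k) =
     (Nk (M+4) + 1 - 2 * trib (M+4)) + (\<Sum>k\<in>{k. 3 \<le> k \<and> k + 4 \<le> M + 7}. Nk k + 1 - 2 * trib k)"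
    unfolding e using f nm by simp
  have l: "trib (Suc M + 2) = trib (M+3)" "trib (Suc M + 1) = trib (M+2)" by (simp_all add: numeral_eq_Suc)
  have sub: "Nk (M+4) + 1 - 2 * trib (M+4) + 2 * trib (M+4) = Nk (M+4) + 1" using b by simp
  define X where "X = Nk (M+4) + 1 - 2 * trib (M+4)"
  define SS where "SS = (\<Sum>k\<in>{k. 3 \<le> k \<and> k + 4 \<le> M + 7}. Nk k + 1 - 2 * trib k)"
  have h1: "2 * SS + (M + 7) = trib (M+2) + trib (M+1) + 3" using Suc.IH SS_def by simp
  have h2: "X + 2 * trib (M+4) = Nk (M+4) + 1" using sub X_def by simp
  have "2 * (X + SS) + (Suc M + 7) = trib (M + 3) + trib (M + 2) + 3"
    using arith_aux[OF h1 h2 c'] .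
  then show ?case unfolding S l X_def SS_def .
qed



lemma cube_count_card: "cube_count (trib m) = (\<Sum>k\<in>{k. 3 \<le> k \<and> k + 4 \<le> m}. Nk k + 1 - 2 * trib k)"
proof -
  have "cube_count (trib m) = card (froot ` Iset m)" unfolding cube_count_def cubes_eq ..
  also have "\<dots> = card (Iset m)" using froot_inj by (rule card_image)
  finally show ?thesis using card_Iset by simp
qed

theorem theorem5p2:
  shows "(\<forall>m. m \<le> 6 \<longrightarrow> cube_count (trib m) = 0) \<and>
         (\<forall>m. m \<ge> 7 \<longrightarrow>
            real (cube_count (trib m)) =
              (real (trib (m - 5)) + real (trib (m - 6)) - real m + 3) / 2)"
proof (intro conjI allI impI)
  fix m :: nat assume "m \<le> 6"
  then have e: "{k. 3 \<le> k \<and> k + 4 \<le> m} = {}" by auto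
  show "cube_count (trib m) = 0" unfolding cube_count_card e by simp
next
  fix m :: nat assume m7: "m \<ge> 7"
  then obtain M where M: "m = M + 7" by (metis add.commute le_Suc_ex)
  have "2 * cube_count (trib m) + m = trib (M+2) + trib (M+1) + 3"
    using sum_formula[of M] cube_count_card[of m] M by simp
  moreover have "m - 5 = M + 2" "m - 6 = M + 1" using M by simp_all
  ultimately have "2 * cube_count (trib m) + m = trib (m-5) + trib (m-6) + 3" by simp
  then have "real (2 * cube_count (trib m) + m) = real (trib (m-5) + trib (m-6) + 3)" by (simp only:)
  then show "real (cube_count (trib m)) = (real (trib (m - 5)) + real (trib (m - 6)) - real m + 3) / 2"
    by simp
qed


end
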